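(* Let $p>1$ and let $f:\mathbb{N}\to\mathbb{R}_{\geq 0}$ be a concave function such that $n\mapsto \frac{f(n)^p}{n}$ is non-decreasing. Let $M=\{m_1,m_2,\dots,m_{2k}\}$ be a finite subset of $\mathbb{N}$ with $m_i<m_{i+1}$ for all $i$ and $m_1\geq 1$. Then \[ \sum_{i=1}^{k} \frac{f(m_{2i})^p}{m_{2i}}\,(m_{2i}-m_{2i-1}) \;\geq\; \left(\tfrac{1}{2}\right)^{3+p} f\Big(\sum_{i=1}^{k} (m_{2i}-m_{2i-1})\Big)^p. \]
   Context: A function $f:\mathbb{N}\to\mathbb{R}_{\geq 0}$ is called concave if $f$ is non-decreasing and for all $m,n\in\mathbb{N}$ with $n\geq m$ one has $f(n+m)-f(n)\leq f(n)-f(n-m)$. *)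

theory Defs
  imports Complex_Main
begin

definition concave_nat :: "(nat \<Rightarrow> real) \<Rightarrow> bool" where
  "concave_nat f \<longleftrightarrow> (\<forall>n. f n \<ge> 0) \<and> mono f \<and>
     (\<forall>m n. m \<le> n \<longrightarrow> f (n + m) - f n \<le> f n - f (n - m))"

end

theory Submission
  imports Defs
begin

theorem lemma2p2:
  fixes p :: real and f :: "nat \<Rightarrow> real" and m :: "nat \<Rightarrow> nat" and k :: nat
  assumes "p > 1"
    and "concave_nat f"
    and "\<And>a b. 1 \<le> a \<Longrightarrow> a \<le> b \<Longrightarrow> f a powr p / real a \<le> f b powr p / real b"
    and "k \<ge> 1"
    and "\<And>i. 1 \<le> i \<Longrightarrow> i < 2 * k \<Longrightarrow> m i < m (Suc i)"
    and "m 1 \<ge> 1"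
  shows "(\<Sum>i=1..k. f (m (2*i)) powr p / real (m (2*i)) * real (m (2*i) - m (2*i - 1)))
           \<ge> (1/2) powr (3 + p) * f (\<Sum>i=1..k. m (2*i) - m (2*i - 1)) powr p"
proof -
  define d where "d i = m (2*i) - m (2*i - 1)" for i
  define S where "S i = (\<Sum>l=1..i. d l)" for i
  define g where "g a = f a powr p / real a" for a
  have f0: "\<And>n. f n \<ge> 0" and fmono: "mono f"
    and fconc: "\<And>a b. a \<le> b \<Longrightarrow> f (b + a) - f b \<le> f b - f (b - a)"
    using assms(2) unfolding concave_nat_def by auto
  have hd: "m (2*i - 1) < m (2*i)" if "1 \<le> i" "i \<le> k" for i
  proof -
    have "m (2*i - 1) < m (Suc (2*i - 1))" using assms(5)[of "2*i-1"] that by auto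
    moreover have "Suc (2*i - 1) = 2*i" using that by auto
    ultimately show ?thesis by simp
  qed
  have d1: "d i \<ge> 1" if "1 \<le> i" "i \<le> k" for i
    using hd[OF that] unfolding d_def by auto
  have hm: "i \<le> k \<longrightarrow> S i \<le> m (2*i)" for i
  proof (induction i)
    case 0 then show ?case by (simp add: S_def)
  next
    case (Suc i)
    show ?case
    proof
      assume ik: "Suc i \<le> k"
      show "S (Suc i) \<le> m (2 * Suc i)"
      proof (cases "i = 0")
        case True then show ?thesis by (simp add: S_def d_def)
      next
        case False
        have a: "m (2*i) < m (Suc (2*i))" using assms(5)[of "2*i"] ik False by auto
        have b: "S (Suc i) = S i + d (Suc i)" by (simp add: S_def)
        have c: "d (Suc i) = m (2*i+2) - m (2*i+1)" by (simp add: d_def)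
        have e: "m (2*i+1) < m (2*i+2)" using hd[of "Suc i"] ik by auto
        show ?thesis using Suc ik a b c e by auto
      qed
    qed
  qed
  have Smono: "S i \<le> S i'" if "i \<le> i'" for i i'
    unfolding S_def by (rule sum_mono2) (use that in auto)
  have S1: "S i \<ge> 1" if "1 \<le> i" "i \<le> k" for i
  proof -
    have "S 1 = d 1" by (simp add: S_def)
    then show ?thesis using d1[of 1] assms(4) Smono[OF that(1)] by auto
  qed
  define D where "D = S k"
  have D1: "D \<ge> 1" using S1[of k] assms(4) D_def by auto
  have ex: "2 * S k \<ge> D" using D_def by simp
  define j where "j = (LEAST j. 2 * S j \<ge> D)"
  have j1: "2 * S j \<ge> D" unfolding j_def by (rule LeastI[of _ k]) (rule ex)
  have jk: "j \<le> k" unfolding j_def by (rule Least_le) (rule ex)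
  have j0: "j \<noteq> 0" using j1 D1 by (cases j) (auto simp: S_def)
  have j2: "\<not> 2 * S (j-1) \<ge> D" unfolding j_def
    by (rule not_less_Least) (use j0 j_def in auto)
  have Sj1: "S j \<ge> 1" using S1[of j] j0 jk by auto
  have split: "(\<Sum>i=1..k. d i) = S (j-1) + (\<Sum>i=j..k. d i)"
  proof -
    have "{1..k} = {1..j-1} \<union> {j..k}" using j0 jk by auto
    then have "(\<Sum>i=1..k. d i) = (\<Sum>i\<in>{1..j-1} \<union> {j..k}. d i)" by simp
    also have "\<dots> = S (j-1) + (\<Sum>i=j..k. d i)"
      by (subst sum.union_disjoint) (auto simp: S_def)
    finally show ?thesis .
  qed
  have DS: "real D = real (S (j-1)) + (\<Sum>i=j..k. real (d i))"
    using split by (simp add: D_def S_def flip: of_nat_sum)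
  have half: "(\<Sum>i=j..k. real (d i)) \<ge> real D / 2" using DS j2 by linarith
  have fD: "f D \<le> 2 * f (S j)"
  proof -
    have "f D \<le> f (S j + S j)" using fmono j1 by (auto simp: mono_def)
    also have "\<dots> \<le> 2 * f (S j)" using fconc[of "S j" "S j"] f0[of 0] by simp
    finally show ?thesis .
  qed
  have pw: "f D powr p \<le> 2 powr p * f (S j) powr p"
  proof -
    have "f D powr p \<le> (2 * f (S j)) powr p" using powr_mono2[OF _ f0 fD] assms(1) by simp
    also have "\<dots> = 2 powr p * f (S j) powr p" using f0 by (simp add: powr_mult)
    finally show ?thesis .
  qed
  have gSj: "g (S j) \<ge> f (S j) powr p / real D"
    unfolding g_def
    by (rule divide_left_mono) (use Sj1 Smono[OF jk] D_def in auto)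
  have gi: "g (m (2*i)) \<ge> g (S j)" if "j \<le> i" "i \<le> k" for i
    unfolding g_def using assms(3)[of "S j" "m (2*i)"] Sj1 Smono[OF that(1)] hm[of i] that by auto
  have gnn: "g a \<ge> 0" for a unfolding g_def by simp
  have "(\<Sum>i=1..k. g (m (2*i)) * real (d i)) \<ge> (\<Sum>i=j..k. g (m (2*i)) * real (d i))"
    by (rule sum_mono2) (use j0 gnn in auto)
  moreover have "(\<Sum>i=j..k. g (m (2*i)) * real (d i)) \<ge> (\<Sum>i=j..k. g (S j) * real (d i))"
    by (rule sum_mono) (use gi in \<open>auto intro: mult_right_mono\<close>)
  moreover have "(\<Sum>i=j..k. g (S j) * real (d i)) = g (S j) * (\<Sum>i=j..k. real (d i))"
    by (simp add: sum_distrib_left)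
  moreover have "g (S j) * (\<Sum>i=j..k. real (d i)) \<ge> f (S j) powr p / real D * (real D / 2)"
    by (rule mult_mono) (use gSj half D1 gnn in auto)
  moreover have "f (S j) powr p / real D * (real D / 2) = f (S j) powr p / 2" using D1 by simp
  ultimately have L: "(\<Sum>i=1..k. g (m (2*i)) * real (d i)) \<ge> f (S j) powr p / 2" by linarith
  have c: "(1/2::real) powr (3 + p) = 1 / (8 * 2 powr p)"
    by (simp add: powr_add powr_divide)
  have "(1/2) powr (3 + p) * f D powr p \<le> (2 powr p * f (S j) powr p) / (8 * 2 powr p)"
    using pw c by (simp add: divide_right_mono pos_divide_le_eq mult.commute)
  also have "\<dots> = f (S j) powr p / 8" by simp
  also have "\<dots> \<le> f (S j) powr p / 2" by simp
  finally have R: "(1/2) powr (3 + p) * f D powr p \<le> f (S j) powr p / 2" .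
  show ?thesis using L R unfolding g_def d_def D_def S_def by simp
qed

end
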